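(* Let $f:\mathbb{R}^{n\times n}\to\mathbb{R}$ be differentiable. Let $f^*=\min_{X\in\Pi_n} f(X)$ and $\underline{f}=\min_{X\in\mathcal{D}_n} f(X)$. Suppose $\sigma>\frac12(f^*-\underline{f})$. Then any global minimizer $X(\sigma)$ of \[ \min_{X\in\mathcal{D}_n}\ f(X)+\sigma\|X\|_0 \] is also a global minimizer of $\min_{X\in\Pi_n} f(X)$.
   Context: $\Pi_n=\{X\in\mathbb{R}^{n\times n}: X\mathbf{e}=X^{\mathsf T}\mathbf{e}=\mathbf{e},\ X_{ij}\in\{0,1\}\}$ is the set of $n\times n$ permutation matrices, $\mathcal{D}_n=\{X\in\mathbb{R}^{n\times n}: X\mathbf{e}=X^{\mathsf T}\mathbf{e}=\mathbf{e},\ X\ge 0\}$ is the set of doubly stochastic matrices (entrywise inequality), $\mathbf{e}$ is the all-ones vector, and $\|X\|_0$ is the number of nonzero entries of $X$. *)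

theory Defs
  imports "HOL-Analysis.Analysis"
begin

text \<open>n x n real matrices, with the index set given by a finite type 'n (n = CARD('n)).\<close>

definition perm_mats :: "(real^'n^'n) set" where
  "perm_mats = {X. (\<forall>i. (\<Sum>j\<in>UNIV. X$i$j) = 1) \<and> (\<forall>j. (\<Sum>i\<in>UNIV. X$i$j) = 1)
                   \<and> (\<forall>i j. X$i$j \<in> {0,1})}"

definition ds_mats :: "(real^'n^'n) set" where
  "ds_mats = {X. (\<forall>i. (\<Sum>j\<in>UNIV. X$i$j) = 1) \<and> (\<forall>j. (\<Sum>i\<in>UNIV. X$i$j) = 1)
                   \<and> (\<forall>i j. X$i$j \<ge> 0)}"

definition l0norm :: "real^'n^'n \<Rightarrow> nat" where
  "l0norm X = card {(i,j). X$i$j \<noteq> 0}"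

end

theory Submission
  imports Defs
begin

lemma ds_compact: "compact (ds_mats :: (real^'n^'n) set)"
unfolding compact_eq_bounded_closed proof (intro conjI)
  show "bounded (ds_mats :: (real^'n^'n) set)"
    unfolding bounded_iff
  proof (intro exI ballI)
    fix X :: "real^'n^'n" assume X: "X \<in> ds_mats"
    have "norm X \<le> (\<Sum>i\<in>UNIV. norm (X$i))" by (simp add: norm_vec_def L2_set_le_sum)
    also have "\<dots> \<le> (\<Sum>i\<in>(UNIV::'n set). \<Sum>j\<in>UNIV. norm (X$i$j))"
      by (intro sum_mono) (simp add: norm_vec_def L2_set_le_sum)
    also have "\<dots> = (\<Sum>i\<in>(UNIV::'n set). 1)"
      using X by (auto simp: ds_mats_def intro!: sum.cong)
    finally show "norm X \<le> real CARD('n)" by simp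
  qed

  show "closed (ds_mats :: (real^'n^'n) set)"
    unfolding ds_mats_def
    by (intro closed_Collect_conj closed_Collect_all closed_Collect_eq closed_Collect_le continuous_intros)
qed
lemma l0norm_sum: "l0norm (X::real^'n^'n) = (\<Sum>i\<in>UNIV. card {j. X$i$j \<noteq> 0})"
proof -
  have "{(i,j). X$i$j \<noteq> 0} = Sigma UNIV (\<lambda>i. {j. X$i$j \<noteq> 0})" by auto
  then show ?thesis unfolding l0norm_def by (simp add: card_SigmaI)
qed

lemma row_sum_support:
  fixes X :: "real^'n^'n"
  shows "(\<Sum>j\<in>UNIV. X$i$j) = (\<Sum>j\<in>{j. X$i$j \<noteq> 0}. X$i$j)"
  by (rule sum.mono_neutral_right) auto

lemma ds_col_zero:
  fixes X :: "real^'n^'n"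
  assumes X: "X \<in> ds_mats" and one: "X$i$j = 1" and k: "k \<noteq> i"
  shows "X$k$j = 0"
proof -
  have nn: "\<forall>a b. X$a$b \<ge> 0" and cs: "(\<Sum>a\<in>UNIV. X$a$j) = 1" using X by (auto simp: ds_mats_def)
  have "(\<Sum>a\<in>UNIV. X$a$j) = X$i$j + (\<Sum>a\<in>UNIV-{i}. X$a$j)"
    by (simp add: sum.remove)
  then have "(\<Sum>a\<in>UNIV-{i}. X$a$j) = 0" using cs one by simp
  then have "\<forall>a\<in>UNIV-{i}. X$a$j = 0" using nn sum_nonneg_eq_0_iff[of "UNIV-{i}" "\<lambda>a. X$a$j"] by simp
  then show ?thesis using k by blast
qed

lemma ds_single:
  fixes X :: "real^'n^'n"
  assumes X: "X \<in> ds_mats" and R: "{j. X$i$j \<noteq> 0} = {j0}"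
  shows "X$i$j0 = 1"
proof -
  have "(\<Sum>j\<in>UNIV. X$i$j) = 1" using X by (auto simp: ds_mats_def)
  then show ?thesis using row_sum_support[of X i] R by simp
qed

lemma ds_nonempty:
  fixes X :: "real^'n^'n"
  assumes X: "X \<in> ds_mats"
  shows "{j. X$i$j \<noteq> 0} \<noteq> {}"
proof
  assume "{j. X$i$j \<noteq> 0} = {}"
  moreover have "(\<Sum>j\<in>UNIV. X$i$j) = 1" using X by (auto simp: ds_mats_def)
  ultimately show False using row_sum_support[of X i] by simp
qed

lemma ds_l0:
  fixes X :: "real^'n^'n"
  assumes X: "X \<in> ds_mats" and np: "X \<notin> perm_mats"
  shows "l0norm X \<ge> CARD('n) + 2"
proof -
  define R where "R i = {j. X$i$j \<noteq> 0}" for i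
  define S where "S = {i. card (R i) = 1}"
  have Rne: "R i \<noteq> {}" for i using ds_nonempty[OF X] R_def by auto
  have Rfin: "finite (R i)" for i by simp
  have Rge: "card (R i) \<ge> 1" for i using Rne Rfin
    by (meson card_0_eq less_one not_le)
  have S1: "X$i$j = 1" if iS: "i \<in> S" and jR: "j \<in> R i" for i j
  proof -
    obtain j0 where j0: "R i = {j0}" using iS card_1_singletonE unfolding S_def by blast
    have "{j. X$i$j \<noteq> 0} = {j0}" using j0 unfolding R_def .
    then have "X$i$j0 = 1" by (rule ds_single[OF X])
    moreover have "j = j0" using jR j0 by blast
    ultimately show ?thesis by simp
  qed
  have SnU: "S \<noteq> UNIV"
  proof
    assume SU: "S = UNIV"
    have "\<forall>i j. X$i$j \<in> {0,1}"
    proof (intro allI)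
      fix i j
      show "X$i$j \<in> {0,1}"
      proof (cases "X$i$j = 0")
        case False
        then have "j \<in> R i" by (simp add: R_def)
        then show ?thesis using S1[of i j] SU by auto
      qed simp
    qed
    then show False using np X by (auto simp: ds_mats_def perm_mats_def)
  qed
  have cardS: "card S + 2 \<le> CARD('n)"
  proof (rule ccontr)
    assume "\<not> ?thesis"
    then have big: "card S + 1 \<ge> CARD('n)" by simp
    obtain k where k: "k \<notin> S" using SnU by auto
    have "card S \<le> card (UNIV - {k})" by (rule card_mono) (use k in auto)
    then have "card S \<le> CARD('n) - 1" by (simp add: card_Diff_singleton)
    have Seq: "S = UNIV - {k}"
    proof -
      have sub: "S \<subseteq> UNIV - {k}" using k by auto
      have "card S = card (UNIV - {k})" using big \<open>card S \<le> card (UNIV - {k})\<close>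
        by (simp add: card_Diff_singleton)
      then show ?thesis using card_subset_eq[OF _ sub] by simp
    qed
    define c where "c i = (SOME j. j \<in> R i)" for i
    have cR: "c i \<in> R i" for i unfolding c_def using Rne[of i] by (simp add: some_in_eq)
    have inj: "inj_on c S"
    proof (rule inj_onI)
      fix a b assume a: "a \<in> S" and b: "b \<in> S" and e: "c a = c b"
      show "a = b"
      proof (rule ccontr)
        assume "a \<noteq> b"
        then have "X$b$(c a) = 0" using ds_col_zero[OF X S1[OF a cR[of a]]] by auto
        moreover have "X$b$(c b) \<noteq> 0" using cR[of b] by (simp add: R_def)
        ultimately show False using e by simp
      qed
    qed
    have zero: "X$k$j = 0" if jc: "j \<in> c ` S" for j
    proof -
      obtain i where i: "i \<in> S" "j = c i" using jc by auto
      have "k \<noteq> i" using i k by auto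
      then show ?thesis using ds_col_zero[OF X S1[OF i(1) cR[of i]]] i by simp
    qed
    have "R k \<subseteq> UNIV - c ` S" using zero R_def by auto
    then have "card (R k) \<le> card (UNIV - c ` S)" by (rule card_mono[rotated]) simp
    also have "\<dots> = CARD('n) - card S" using card_image[OF inj]
      by (simp add: card_Diff_subset)
    also have "\<dots> = 1" using Seq by (simp add: card_Diff_singleton)
    finally have "card (R k) = 1" using Rge[of k] by simp
    then show False using k S_def by simp
  qed
  have "(\<Sum>i\<in>UNIV. (if i \<in> S then 1 else 2)) \<le> (\<Sum>i\<in>UNIV. card (R i))"
  proof (rule sum_mono)
    fix i
    show "(if i \<in> S then 1 else 2) \<le> card (R i)"
      using Rge[of i] by (auto simp: S_def)
  qed
  moreover have "(\<Sum>i\<in>UNIV. (if i \<in> S then 1 else 2::nat)) = card S + 2 * card (UNIV - S)"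
    by (simp add: sum.If_cases Int_absorb1 Diff_eq)
  moreover have "card (UNIV - S) = CARD('n) - card S" by (simp add: card_Diff_subset)
  ultimately show ?thesis using cardS l0norm_sum[of X] R_def by simp
qed

lemma perm_l0:
  fixes X :: "real^'n^'n"
  assumes X: "X \<in> perm_mats"
  shows "l0norm X = CARD('n)"
proof -
  have "card {j. X$i$j \<noteq> 0} = 1" for i
  proof -
    have "(\<Sum>j\<in>UNIV. X$i$j) = 1" using X by (auto simp: perm_mats_def)
    also have "(\<Sum>j\<in>UNIV. X$i$j) = (\<Sum>j\<in>{j. X$i$j \<noteq> 0}. 1)"
      unfolding row_sum_support[of X i]
    proof (rule sum.cong)
      fix j assume "j \<in> {j. X$i$j \<noteq> 0}"
      then show "X$i$j = 1" using X unfolding perm_mats_def by blast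
    qed simp
    finally show ?thesis by simp
  qed
  then show ?thesis by (simp add: l0norm_sum)
qed


lemma perm_finite: "finite (perm_mats :: (real^'n^'n) set)"
proof -
  let ?A = "PiE (UNIV::'n set) (\<lambda>_. PiE (UNIV::'n set) (\<lambda>_. {0::real,1}))"
  have "perm_mats \<subseteq> (\<lambda>g. \<chi> i j. g i j) ` ?A"
  proof
    fix X :: "real^'n^'n" assume X: "X \<in> perm_mats"
    show "X \<in> (\<lambda>g. \<chi> i j. g i j) ` ?A"
    proof (rule image_eqI)
      show "X = (\<lambda>g. \<chi> i j. g i j) (\<lambda>i j. X$i$j)" by (simp add: vec_eq_iff)
      show "(\<lambda>i j. X$i$j) \<in> ?A" using X by (auto simp: perm_mats_def PiE_iff)
    qed
  qed
  moreover have "finite ?A" by (intro finite_PiE) auto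
  ultimately show ?thesis by (meson finite_surj)
qed

lemma perm_ne: "(mat 1 :: real^'n^'n) \<in> perm_mats"
  by (auto simp: perm_mats_def mat_def if_distrib sum.delta sum.delta')

lemma perm_ds: "perm_mats \<subseteq> ds_mats"
  by (auto simp: perm_mats_def ds_mats_def) (metis order_refl zero_le_one)

theorem lemma3p1:
  fixes f :: "real^'n^'n \<Rightarrow> real" and \<sigma> :: real and Xs :: "real^'n^'n"
  assumes diff: "\<forall>X. f differentiable (at X)"
    and sig: "\<sigma> > (Min (f ` perm_mats) - Inf (f ` ds_mats)) / 2"
    and Xs_in: "Xs \<in> ds_mats"
    and Xs_min: "\<forall>Y\<in>ds_mats. f Xs + \<sigma> * real (l0norm Xs) \<le> f Y + \<sigma> * real (l0norm Y)"
  shows "Xs \<in> perm_mats \<and> (\<forall>Y\<in>perm_mats. f Xs \<le> f Y)"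
proof -
  have cont: "continuous_on ds_mats f"
    using diff differentiable_imp_continuous_within continuous_at_imp_continuous_on by blast
  have "compact (f ` ds_mats)" by (rule compact_continuous_image[OF cont ds_compact])
  then have bdd: "bdd_below (f ` ds_mats)" by (simp add: bounded_imp_bdd_below compact_imp_bounded)
  have infle: "Inf (f ` ds_mats) \<le> f Y" if "Y \<in> ds_mats" for Y
    using cInf_lower[OF imageI[OF that] bdd] .
  have "Min (f ` perm_mats) \<in> f ` perm_mats"
    using perm_finite perm_ne by (intro Min_in) auto
  then obtain P where P: "P \<in> perm_mats" "f P = Min (f ` perm_mats)" by auto
  have Pds: "P \<in> ds_mats" using P perm_ds by auto
  have sigpos: "\<sigma> > 0" using sig infle[OF Pds] P by simp
  have inperm: "Xs \<in> perm_mats"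
  proof (rule ccontr)
    assume np: "Xs \<notin> perm_mats"
    have l: "real (l0norm Xs) \<ge> real CARD('n) + 2" using ds_l0[OF Xs_in np] by linarith
    have "f Xs + \<sigma> * real (l0norm Xs) \<le> f P + \<sigma> * real CARD('n)"
      using Xs_min Pds perm_l0[OF P(1)] by auto
    moreover have "\<sigma> * (real CARD('n) + 2) \<le> \<sigma> * real (l0norm Xs)"
      using l sigpos by (intro mult_left_mono) auto
    ultimately have "2 * \<sigma> \<le> f P - f Xs" by (simp add: algebra_simps)
    then show False using sig P infle[OF Xs_in] by simp
  qed
  moreover have "\<forall>Y\<in>perm_mats. f Xs \<le> f Y"
  proof
    fix Y :: "real^'n^'n" assume Y: "Y \<in> perm_mats"
    then have "f Xs + \<sigma> * real (l0norm Xs) \<le> f Y + \<sigma> * real (l0norm Y)"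
      using Xs_min perm_ds by auto
    then show "f Xs \<le> f Y" using perm_l0[OF Y] perm_l0[OF inperm] by simp
  qed
  ultimately show ?thesis by blast
qed

end
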